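(* Let $R,K$ be positive integers, $m=RK$, $p\in[0,1]$. In a serial-star network with $R$ branches of $K$ sensors, let $\mathcal{T}$ be the random set of measurements reaching the fusion center. Write $$h(x)=\left[\frac{1-p+p^{K+1}x^K(1-x)}{1-px}\right]^R=\sum_{i=0}^m d_i x^i$$ (a polynomial in $x$). Then $\mathbb{P}\{|\mathcal{T}|=i\}=d_i$ for every $i=0,1,\ldots,m$.
   Context: Serial-star network: in each of the $R$ branches, sensor $j$ ($j=1,\ldots,K$) forwards all measurements it holds (its own plus those received from sensor $j-1$) to sensor $j+1$, and sensor $K$ forwards to the fusion center. Each of the $RK$ links is an independent Bernoulli erasure channel that delivers the transmitted data with probability $p$ and loses it otherwise; hence the measurement of sensor $j$ in a branch reaches the fusion center iff all $K-j+1$ links from sensor $j$ to the fusion center succeed. *)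

theory Defs
  imports "HOL-Probability.Probability" "HOL-Computational_Algebra.Polynomial"
begin

text \<open>Links of the serial-star network: link (r,j), r in 1..R, j in 1..K, is the
link leaving sensor j of branch r (towards sensor j+1, or the fusion center if j = K).
An outcome w assigns True (delivered) / False (lost) to every link.\<close>
definition ss_links :: "nat \<Rightarrow> nat \<Rightarrow> (nat \<times> nat) set" where
  "ss_links R K = {1..R} \<times> {1..K}"

text \<open>Random set of measurements (identified with sensors (r,j)) reaching the fusion
center: sensor j's measurement arrives iff links j, ..., K of its branch all succeed.\<close>
definition ss_received :: "nat \<Rightarrow> nat \<Rightarrow> (nat \<times> nat \<Rightarrow> bool) \<Rightarrow> (nat \<times> nat) set" where
  "ss_received R K w = {(r, j) \<in> ss_links R K. \<forall>l\<in>{j..K}. w (r, l)}"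

definition ss_channel :: "nat \<Rightarrow> nat \<Rightarrow> real \<Rightarrow> (nat \<times> nat \<Rightarrow> bool) pmf" where
  "ss_channel R K p = Pi_pmf (ss_links R K) False (\<lambda>_. bernoulli_pmf p)"

text \<open>The polynomial h(x) = [(1 - p + p^(K+1) x^K (1 - x)) / (1 - p x)]^R; the division
is exact, so h is the quotient of numerator^R by (1 - p x)^R.\<close>
definition ss_h :: "nat \<Rightarrow> nat \<Rightarrow> real \<Rightarrow> real poly" where
  "ss_h R K p = ([:1 - p:] + smult (p ^ (K + 1)) (monom 1 K * [:1, -1:])) ^ R
                 div [:1, -p:] ^ R"

end

theory Submission
  imports Defs
begin

definition gpoly :: "nat \<Rightarrow> real \<Rightarrow> real poly" where
  "gpoly K p = (\<Sum>t<K. monom ((1 - p) * p ^ t) t) + monom (p ^ K) K"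

lemma coeff_gpoly:
  "coeff (gpoly K p) t = (if t < K then (1 - p) * p ^ t else if t = K then p ^ K else 0)"
  by (auto simp: gpoly_def coeff_sum coeff_monom)

lemma geom_aux:
  fixes x p :: real
  shows "(\<Sum>t<K. (1 - p) * p ^ t * x ^ t) * (1 - p * x) = (1 - p) * (1 - (p * x) ^ K)"
  by (induction K) (auto simp: algebra_simps power_mult_distrib)

lemma num_eq:
  "[:1 - p:] + smult (p ^ (K + 1)) (monom 1 K * [:1, -1:]) = gpoly K p * [:1, - p:]"
proof -
  have "poly ([:1 - p:] + smult (p ^ (K + 1)) (monom 1 K * [:1, -1:])) x
        = poly (gpoly K p * [:1, - p:]) x" for x
  proof -
    have "poly (gpoly K p * [:1, - p:]) x
       = (\<Sum>t<K. (1 - p) * p ^ t * x ^ t) * (1 - p * x) + p ^ K * x ^ K * (1 - p * x)"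
      by (simp add: gpoly_def poly_sum poly_monom algebra_simps)
    also have "\<dots> = (1 - p) * (1 - (p * x) ^ K) + p ^ K * x ^ K * (1 - p * x)"
      by (simp add: geom_aux)
    finally show ?thesis
      by (simp add: poly_monom algebra_simps power_mult_distrib)
  qed
  then have "poly ([:1 - p:] + smult (p ^ (K + 1)) (monom 1 K * [:1, -1:]))
        = poly (gpoly K p * [:1, - p:])" by (rule ext)
  then show ?thesis by (simp only: poly_eq_poly_eq_iff)
qed

lemma ss_h_eq: "ss_h R K p = gpoly K p ^ R"
proof -
  have nz: "[:1, - p:] ^ R \<noteq> 0" by simp
  show ?thesis
    unfolding ss_h_def num_eq power_mult_distrib
    using nz by simp
qed

definition bset :: "nat \<Rightarrow> nat \<Rightarrow> (nat \<times> nat \<Rightarrow> bool) \<Rightarrow> nat set" where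
  "bset K r w = {j \<in> {1..K}. \<forall>l\<in>{j..K}. w (r, l)}"

lemma bset_char:
  assumes "t \<le> K"
  shows "card (bset K r w) = t \<longleftrightarrow>
         (\<forall>l\<in>{K-t<..K}. w (r, l)) \<and> (t < K \<longrightarrow> \<not> w (r, K - t))"
proof
  assume H: "(\<forall>l\<in>{K-t<..K}. w (r, l)) \<and> (t < K \<longrightarrow> \<not> w (r, K - t))"
  have "bset K r w = {K-t<..K}"
  proof (intro equalityI subsetI)
    fix j assume j: "j \<in> bset K r w"
    show "j \<in> {K-t<..K}"
    proof (rule ccontr)
      assume "j \<notin> {K-t<..K}"
      with j have "j \<le> K - t" "1 \<le> j" "j \<le> K" by (auto simp: bset_def)
      then have "t < K" by linarith
      with H have "\<not> w (r, K - t)" by blast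
      moreover have "K - t \<in> {j..K}" using \<open>j \<le> K - t\<close> by auto
      ultimately show False using j by (auto simp: bset_def)
    qed
  next
    fix j assume "j \<in> {K-t<..K}"
    then show "j \<in> bset K r w" using H by (auto simp: bset_def)
  qed
  then show "card (bset K r w) = t" using assms by simp
next
  assume C: "card (bset K r w) = t"
  show "(\<forall>l\<in>{K-t<..K}. w (r, l)) \<and> (t < K \<longrightarrow> \<not> w (r, K - t))"
  proof (rule ccontr)
    assume "\<not> ?thesis"
    then consider l where "l \<in> {K-t<..K}" "\<not> w (r, l)"
      | "\<forall>l\<in>{K-t<..K}. w (r, l)" "t < K" "w (r, K - t)" by blast
    then show False
    proof cases
      case (1 l)
      have "bset K r w \<subseteq> {l<..K}"
      proof
        fix j assume j: "j \<in> bset K r w"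
        have "l < j"
        proof (rule ccontr)
          assume "\<not> l < j"
          then have "l \<in> {j..K}" using 1 by auto
          then show False using j 1 by (auto simp: bset_def)
        qed
        then show "j \<in> {l<..K}" using j by (auto simp: bset_def)
      qed
      then have "card (bset K r w) \<le> card {l<..K}" by (intro card_mono) auto
      then show False using C 1 by auto
    next
      case 2
      have "{K-t..K} \<subseteq> bset K r w"
      proof
        fix j assume j: "j \<in> {K-t..K}"
        have "\<forall>l\<in>{j..K}. w (r, l)"
        proof
          fix l assume "l \<in> {j..K}"
          then show "w (r, l)" using 2 j by (cases "l = K - t") auto
        qed
        then show "j \<in> bset K r w" using j 2 by (auto simp: bset_def)
      qed
      then have "card {K-t..K} \<le> card (bset K r w)"
        by (intro card_mono) (auto simp: bset_def)
      then show False using C 2 by auto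
    qed
  qed
qed

lemma card_bset_le: "card (bset K r w) \<le> K"
proof -
  have "card (bset K r w) \<le> card {1..K}" by (intro card_mono) (auto simp: bset_def)
  then show ?thesis by simp
qed

definition bdist :: "nat \<Rightarrow> nat \<Rightarrow> real \<Rightarrow> nat pmf" where
  "bdist K r p = map_pmf (\<lambda>w. card (bset K r w)) (Pi_pmf ({r} \<times> {1..K}) False (\<lambda>_. bernoulli_pmf p))"

lemma bdist_pmf:
  assumes p: "0 \<le> p" "p \<le> 1"
  shows "pmf (bdist K r p) t = coeff (gpoly K p) t"
proof (cases "t \<le> K")
  case False
  have "(\<lambda>w. card (bset K r w)) -` {t} = {}" using False card_bset_le[of K r] 
    by (auto simp: not_le) (metis leD)
  then show ?thesis using False by (simp add: bdist_def pmf_map coeff_gpoly)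
next
  case True
  define A where "A = {K-t<..K}"
  define f where "f = (\<lambda>l::nat. if l \<in> A then p else if t < K \<and> l = K - t then 1 - p else 1)"
  define S where "S = (\<lambda>x::nat\<times>nat. if snd x \<in> A then {True}
                        else if t < K \<and> snd x = K - t then {False} else UNIV)"
  have pre: "(\<lambda>w. card (bset K r w)) -` {t} = Pi ({r} \<times> {1..K}) S"
  proof (intro equalityI subsetI)
    fix w assume "w \<in> (\<lambda>w. card (bset K r w)) -` {t}"
    then have "card (bset K r w) = t" by simp
    then have H: "(\<forall>l\<in>{K-t<..K}. w (r, l)) \<and> (t < K \<longrightarrow> \<not> w (r, K - t))"
      using bset_char[OF True] by blast
    show "w \<in> Pi ({r} \<times> {1..K}) S"
      using H by (auto simp: S_def A_def Pi_def)
  next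
    fix w assume w: "w \<in> Pi ({r} \<times> {1..K}) S"
    have "(\<forall>l\<in>{K-t<..K}. w (r, l)) \<and> (t < K \<longrightarrow> \<not> w (r, K - t))"
    proof (intro conjI ballI impI)
      fix l assume l: "l \<in> {K-t<..K}"
      then have "(r, l) \<in> {r} \<times> {1..K}" by auto
      then have "w (r, l) \<in> S (r, l)" using w by (auto simp: Pi_def)
      then show "w (r, l)" using l by (simp add: S_def A_def)
    next
      assume "t < K"
      then have "(r, K - t) \<in> {r} \<times> {1..K}" by auto
      then have "w (r, K - t) \<in> S (r, K - t)" using w by (auto simp: Pi_def)
      then show "\<not> w (r, K - t)" using \<open>t < K\<close> by (auto simp: S_def A_def)
    qed
    then show "w \<in> (\<lambda>w. card (bset K r w)) -` {t}"
      using bset_char[OF True] by blast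
  qed
  have fx: "measure_pmf.prob (bernoulli_pmf p) (S x) = f (snd x)" for x
    using p by (auto simp: S_def f_def measure_pmf_single)
  have "pmf (bdist K r p) t = (\<Prod>x\<in>{r} \<times> {1..K}. f (snd x))"
    unfolding bdist_def pmf_map pre
    by (subst measure_Pi_pmf_Pi) (auto simp: fx)
  also have "\<dots> = (\<Prod>l\<in>{1..K}. f l)"
  proof -
    have "{r} \<times> {1..K} = (\<lambda>l. (r, l)) ` {1..K}" by auto
    then show ?thesis by (simp add: prod.reindex inj_on_def)
  qed
  also have "\<dots> = (\<Prod>l\<in>{1..K}. (if l \<in> A then p else 1) * (if t < K \<and> l = K - t then 1 - p else 1))"
    by (intro prod.cong refl) (auto simp: f_def A_def)
  also have "\<dots> = (\<Prod>l\<in>{1..K}. (if l \<in> A then p else 1)) * (\<Prod>l\<in>{1..K}. (if t < K \<and> l = K - t then 1 - p else 1))"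
    by (rule prod.distrib)
  also have "(\<Prod>l\<in>{1..K}. (if l \<in> A then p else 1)) = (\<Prod>l\<in>{1..K} \<inter> A. p)"
    by (subst prod.inter_restrict) auto
  also have "\<dots> = p ^ t"
  proof -
    have "{1..K} \<inter> A = {K-t<..K}" using True by (auto simp: A_def)
    then show ?thesis using True by simp
  qed
  also have "(\<Prod>l\<in>{1..K}. (if t < K \<and> l = K - t then 1 - p else 1)) = (if t < K then 1 - p else 1)"
  proof (cases "t < K")
    case True
    then have "K - t \<in> {1..K}" by auto
    then show ?thesis using True by (simp add: prod.delta)
  qed simp
  finally show ?thesis using True by (auto simp: coeff_gpoly)
qed

lemma pmf_sum_pair:
  "pmf (map_pmf (\<lambda>(a, b). a + b) (pair_pmf P Q)) (n::nat) = (\<Sum>i\<le>n. pmf P i * pmf Q (n - i))"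
proof -
  have pre: "(\<lambda>(a, b). a + b) -` {n} = (\<lambda>i. (i, n - i)) ` {..n}" by force
  have "pmf (map_pmf (\<lambda>(a, b). a + b) (pair_pmf P Q)) n = sum (pmf (pair_pmf P Q)) ((\<lambda>i. (i, n - i)) ` {..n})"
    unfolding pmf_map pre by (rule measure_measure_pmf_finite) simp
  also have "\<dots> = (\<Sum>i\<le>n. pmf P i * pmf Q (n - i))"
    by (subst sum.reindex) (auto simp: inj_on_def pmf_pair)
  finally show ?thesis .
qed

lemma received_split:
  "ss_received (Suc R) K (\<lambda>x. if x \<in> ss_links R K then f x else g x)
     = ss_received R K f \<union> Pair (Suc R) ` bset K (Suc R) g"
  (is "?L = ?A \<union> ?B")
proof (intro equalityI subsetI)
  fix x assume "x \<in> ?L"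
  then obtain a b where x: "x = (a, b)" "1 \<le> a" "a \<le> Suc R" "1 \<le> b" "b \<le> K"
    and H: "\<forall>l\<in>{b..K}. (if (a, l) \<in> ss_links R K then f (a, l) else g (a, l))"
    by (auto simp: ss_received_def ss_links_def)
  show "x \<in> ?A \<union> ?B"
  proof (cases "a \<le> R")
    case True
    then have "\<forall>l\<in>{b..K}. f (a, l)" using H x by (auto simp: ss_links_def)
    then have "x \<in> ?A" using x True by (auto simp: ss_received_def ss_links_def)
    then show ?thesis by blast
  next
    case False
    then have a: "a = Suc R" using x by simp
    then have "\<forall>l\<in>{b..K}. g (a, l)" using H by (auto simp: ss_links_def)
    then have "b \<in> bset K (Suc R) g" using x a by (auto simp: bset_def)
    then show ?thesis using x a by blast
  qed
next
  fix x assume "x \<in> ?A \<union> ?B"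
  then show "x \<in> ?L"
  proof
    assume "x \<in> ?A"
    then show "x \<in> ?L" by (auto simp: ss_received_def ss_links_def)
  next
    assume "x \<in> ?B"
    then obtain b where b: "x = (Suc R, b)" "1 \<le> b" "b \<le> K" "\<forall>l\<in>{b..K}. g (Suc R, l)"
      by (auto simp: bset_def)
    then show "x \<in> ?L" by (auto simp: ss_received_def ss_links_def)
  qed
qed

lemma card_received_split:
  "card (ss_received (Suc R) K (\<lambda>x. if x \<in> ss_links R K then f x else g x))
     = card (ss_received R K f) + card (bset K (Suc R) g)"
proof -
  have fin1: "finite (ss_received R K f)"
    by (rule finite_subset[of _ "ss_links R K"]) (auto simp: ss_received_def ss_links_def)
  have fin2: "finite (bset K (Suc R) g)" by (auto simp: bset_def)
  have disj: "ss_received R K f \<inter> Pair (Suc R) ` bset K (Suc R) g = {}"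
    by (auto simp: ss_received_def ss_links_def)
  show ?thesis unfolding received_split
    using fin1 fin2 disj by (simp add: card_Un_disjoint card_image inj_on_def)
qed

definition Ndist :: "nat \<Rightarrow> nat \<Rightarrow> real \<Rightarrow> nat pmf" where
  "Ndist R K p = map_pmf (\<lambda>w. card (ss_received R K w)) (ss_channel R K p)"

lemma Ndist_Suc:
  "Ndist (Suc R) K p = map_pmf (\<lambda>(a, b). a + b) (pair_pmf (Ndist R K p) (bdist K (Suc R) p))"
proof -
  have links: "ss_links (Suc R) K = ss_links R K \<union> {Suc R} \<times> {1..K}"
    by (auto simp: ss_links_def)
  have fin: "finite (ss_links R K)" by (simp add: ss_links_def)
  have disj: "ss_links R K \<inter> {Suc R} \<times> {1..K} = {}" by (auto simp: ss_links_def)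
  have ch: "ss_channel (Suc R) K p = map_pmf (\<lambda>(f, g) x. if x \<in> ss_links R K then f x else g x)
      (pair_pmf (ss_channel R K p) (Pi_pmf ({Suc R} \<times> {1..K}) False (\<lambda>_. bernoulli_pmf p)))"
    unfolding ss_channel_def links using fin disj by (subst Pi_pmf_union) auto
  show ?thesis
    unfolding Ndist_def bdist_def ch map_pair[symmetric] map_pmf_comp
    apply (intro map_pmf_cong refl)
    subgoal for x by (cases x) (simp only: case_prod_conv card_received_split)
    done
qed

lemma Ndist_pmf:
  assumes "0 \<le> p" "p \<le> 1"
  shows "pmf (Ndist R K p) i = coeff (gpoly K p ^ R) i"
proof (induction R arbitrary: i)
  case 0
  have "Ndist 0 K p = return_pmf 0"
    by (simp add: Ndist_def ss_channel_def ss_links_def ss_received_def)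
  then show ?case by (simp add: indicator_def)
next
  case (Suc R)
  have "pmf (Ndist (Suc R) K p) i = (\<Sum>j\<le>i. pmf (Ndist R K p) j * pmf (bdist K (Suc R) p) (i - j))"
    unfolding Ndist_Suc by (rule pmf_sum_pair)
  also have "\<dots> = (\<Sum>j\<le>i. coeff (gpoly K p ^ R) j * coeff (gpoly K p) (i - j))"
    using assms by (simp add: Suc.IH bdist_pmf)
  also have "\<dots> = coeff (gpoly K p ^ R * gpoly K p) i" by (simp add: coeff_mult)
  finally show ?case by (simp add: mult.commute)
qed

theorem lemma4:
  fixes R K :: nat and p :: real
  assumes "R > 0" and "K > 0" and "0 \<le> p" and "p \<le> 1"
  shows "\<forall>i \<le> R * K.
           measure_pmf.prob (ss_channel R K p) {w. card (ss_received R K w) = i}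
             = coeff (ss_h R K p) i"
proof (intro allI impI)
  fix i
  have "measure_pmf.prob (ss_channel R K p) {w. card (ss_received R K w) = i} = pmf (Ndist R K p) i"
    by (simp add: Ndist_def pmf_map vimage_def)
  also have "\<dots> = coeff (ss_h R K p) i"
    using assms by (simp add: Ndist_pmf ss_h_eq)
  finally show "measure_pmf.prob (ss_channel R K p) {w. card (ss_received R K w) = i} = coeff (ss_h R K p) i" .
qed

end
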